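(* The sequence $\left(\frac{h(n)}{\log n}\right)_{n=2}^\infty$ is $\mathcal I_0$-convergent to $0$; that is, for every $\varepsilon>0$ the set $\{n\ge 2: \frac{h(n)}{\log n}\ge\varepsilon\}$ belongs to $\mathcal I_0$.
   Context: $\mathbb N$ denotes the set of positive integers. For $n>1$ with canonical factorization $n=p_1^{\alpha_1}\cdots p_k^{\alpha_k}$ (distinct primes $p_j$, $\alpha_j\ge1$), $h(n)=\min_{1\le j\le k}\alpha_j$. For $A\subset\mathbb N$ the convergence exponent is $\lambda(A)=\inf\{t>0:\sum_{a\in A}a^{-t}<\infty\}$, and $\mathcal I_0=\{A\subset\mathbb N:\lambda(A)=0\}$. A sequence $(x_n)$ is $\mathcal I$-convergent to $L$ if for every $\varepsilon>0$ the set $\{n:|x_n-L|\ge\varepsilon\}$ belongs to $\mathcal I$. *)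

theory Defs
  imports "HOL-Analysis.Analysis" "HOL-Computational_Algebra.Primes" "HOL-Library.Extended_Real"
begin

definition h_min_exp :: "nat \<Rightarrow> nat" where
  "h_min_exp n = Min ((\<lambda>p. multiplicity p n) ` prime_factors n)"

text \<open>Convergence exponent, valued in the extended reals (infimum of the empty set is \<infinity>).\<close>
definition conv_exp :: "nat set \<Rightarrow> ereal" where
  "conv_exp A = Inf (ereal ` {t::real. t > 0 \<and> (\<lambda>a. real a powr (-t)) summable_on A})"

definition I0 :: "nat set set" where
  "I0 = {A. A \<subseteq> {1..} \<and> conv_exp A = 0}"

end

theory Submission
  imports Defs
begin

lemma cofactor_smooth:
  fixes n q :: nat
  assumes "n > 0" "prime q" "prime_factors n \<subseteq> insert q S"
  shows "n div q ^ multiplicity q n > 0 \<and> prime_factors (n div q ^ multiplicity q n) \<subseteq> S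
     \<and> n = q ^ multiplicity q n * (n div q ^ multiplicity q n)"
proof -
  define m where "m = n div q ^ multiplicity q n"
  have d: "q ^ multiplicity q n dvd n" by (rule multiplicity_dvd)
  have e: "n = q ^ multiplicity q n * m" using d unfolding m_def by simp
  have nd: "\<not> q dvd m" unfolding m_def by (rule multiplicity_decompose) (use assms in auto)
  have mp: "m > 0" using e assms(1) by (metis gr0I mult_0_right)
  have "prime_factors m \<subseteq> S"
  proof
    fix p assume p: "p \<in> prime_factors m"
    hence "p dvd m" "prime p" by auto
    hence "p dvd n" using e by (metis dvd_mult)
    hence "p \<in> prime_factors n" using \<open>prime p\<close> assms(1) by (simp add: in_prime_factors_iff)
    hence "p \<in> insert q S" using assms(3) by auto
    moreover have "p \<noteq> q" using nd \<open>p dvd m\<close> by auto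
    ultimately show "p \<in> S" by auto
  qed
  thus ?thesis using mp e unfolding m_def by auto
qed

lemma smooth_bound:
  fixes t :: real
  assumes "finite S" "\<forall>p\<in>S. prime p" "t > 0"
  shows "\<forall>F. finite F \<longrightarrow> F \<subseteq> {n. n > 0 \<and> prime_factors n \<subseteq> S} \<longrightarrow>
           (\<Sum>n\<in>F. real n powr (-t)) \<le> (\<Prod>p\<in>S. 1 / (1 - real p powr (-t)))"
  using assms(1,2)
proof (induction S rule: finite_induct)
  case empty
  show ?case
  proof (intro allI impI)
    fix F :: "nat set" assume "finite F" "F \<subseteq> {n. n > 0 \<and> prime_factors n \<subseteq> {}}"
    have one: "n = 1" if "n > 0" "prime_factors n \<subseteq> {}" for n :: nat
    proof (rule ccontr)
      assume "n \<noteq> 1"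
      then obtain p where "prime p" "p dvd n" using prime_factor_nat by blast
      hence "p \<in> prime_factors n" using that(1) by (simp add: in_prime_factors_iff)
      thus False using that(2) by auto
    qed
    hence "F \<subseteq> {1}" using \<open>F \<subseteq> _\<close> by auto
    hence "(\<Sum>n\<in>F. real n powr (-t)) \<le> (\<Sum>n\<in>{1::nat}. real n powr (-t))"
      by (intro sum_mono2) auto
    thus "(\<Sum>n\<in>F. real n powr (-t)) \<le> (\<Prod>p\<in>{}. 1 / (1 - real p powr (-t)))" by simp
  qed
next
  case (insert q S)
  define B where "B = (\<Prod>p\<in>S. 1 / (1 - real p powr (-t)))"
  define x where "x = real q powr (-t)"
  have qp: "prime q" using insert by auto
  hence q2: "real q \<ge> 2" using prime_ge_2_nat by auto
  have x0: "x > 0" unfolding x_def using q2 by auto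
  have x1: "x < 1" unfolding x_def using q2 assms(3) by (intro powr_less_one) auto
  have B0: "B \<ge> 0" unfolding B_def
  proof (intro prod_nonneg)
    fix p assume "p \<in> S"
    hence "real p \<ge> 2" using insert prime_ge_2_nat by fastforce
    hence "real p powr (-t) < 1" using assms(3) by (intro powr_less_one) auto
    thus "0 \<le> 1 / (1 - real p powr (-t))" by auto
  qed
  have IH: "\<And>G. finite G \<Longrightarrow> G \<subseteq> {n. n > 0 \<and> prime_factors n \<subseteq> S} \<Longrightarrow>
           (\<Sum>n\<in>G. real n powr (-t)) \<le> B" using insert unfolding B_def by auto
  show ?case
  proof (intro allI impI)
    fix F :: "nat set" assume fF: "finite F" and sF: "F \<subseteq> {n. n > 0 \<and> prime_factors n \<subseteq> insert q S}"
    define g where "g = (\<lambda>n::nat. real n powr (-t))"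
    define J where "J = (\<lambda>n. multiplicity q n) ` F"
    have fJ: "finite J" unfolding J_def using fF by auto
    have inner: "(\<Sum>n\<in>{n\<in>F. multiplicity q n = j}. g n) \<le> x ^ j * B" for j
    proof -
      define Fj where "Fj = {n\<in>F. multiplicity q n = j}"
      define c where "c = (\<lambda>n::nat. n div q ^ j)"
      have props: "\<And>n. n \<in> Fj \<Longrightarrow> c n > 0 \<and> prime_factors (c n) \<subseteq> S \<and> n = q ^ j * c n"
      proof -
        fix n assume "n \<in> Fj"
        hence "n \<in> F" "multiplicity q n = j" unfolding Fj_def by auto
        hence "n > 0" "prime_factors n \<subseteq> insert q S" using sF by auto
        from cofactor_smooth[OF this(1) qp this(2)] \<open>multiplicity q n = j\<close>
        show "c n > 0 \<and> prime_factors (c n) \<subseteq> S \<and> n = q ^ j * c n" unfolding c_def by simp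
      qed
      have inj: "inj_on c Fj"
      proof
        fix a b assume "a \<in> Fj" "b \<in> Fj" "c a = c b"
        thus "a = b" using props[of a] props[of b] by simp
      qed
      have gn: "g n = x ^ j * g (c n)" if "n \<in> Fj" for n
      proof -
        have "g n = real (q ^ j * c n) powr (-t)" unfolding g_def using props[OF that] by metis
        also have "\<dots> = (real q ^ j) powr (-t) * real (c n) powr (-t)"
          by (simp add: powr_mult)
        also have "(real q ^ j) powr (-t) = (real q powr (-t)) ^ j"
        proof -
          have "(real q ^ j) powr (-t) = (real q powr real j) powr (-t)"
            using q2 by (simp add: powr_realpow)
          also have "\<dots> = real q powr (real j * (-t))" by (simp add: powr_powr)
          also have "\<dots> = (real q powr (-t)) ^ j" using q2 by (simp add: powr_power)
          finally show ?thesis .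
        qed
        finally show ?thesis unfolding g_def x_def .
      qed
      have "(\<Sum>n\<in>Fj. g n) = (\<Sum>n\<in>Fj. x ^ j * g (c n))" using gn by auto
      also have "\<dots> = x ^ j * (\<Sum>n\<in>Fj. g (c n))" by (simp add: sum_distrib_left)
      also have "(\<Sum>n\<in>Fj. g (c n)) = (\<Sum>m\<in>c ` Fj. g m)" using sum.reindex[OF inj, of g] by (simp add: o_def)
      also have "\<dots> \<le> B" unfolding g_def
        using IH[of "c ` Fj"] fF props unfolding Fj_def by auto
      finally show ?thesis unfolding Fj_def using x0 by (simp add: mult_left_mono)
    qed
    have "(\<Sum>n\<in>F. g n) = (\<Sum>j\<in>J. \<Sum>n\<in>{n\<in>F. multiplicity q n = j}. g n)"
      unfolding J_def by (rule sum.image_gen[OF fF])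
    also have "\<dots> \<le> (\<Sum>j\<in>J. x ^ j * B)" by (intro sum_mono inner)
    also have "\<dots> = B * (\<Sum>j\<in>J. x ^ j)" by (simp add: sum_distrib_left mult.commute)
    also have "(\<Sum>j\<in>J. x ^ j) \<le> (\<Sum>j. x ^ j)"
      by (intro sum_le_suminf summable_geometric fJ) (use x0 x1 in auto)
    also have "(\<Sum>j. x ^ j) = 1 / (1 - x)" using suminf_geometric[of x] x0 x1 by simp
    finally have "(\<Sum>n\<in>F. g n) \<le> B * (1 / (1 - x))" using B0 by (simp add: mult_left_mono)
    also have "\<dots> = (\<Prod>p\<in>insert q S. 1 / (1 - real p powr (-t)))"
      using insert unfolding B_def x_def by simp
    finally show "(\<Sum>n\<in>F. real n powr (-t)) \<le> (\<Prod>p\<in>insert q S. 1 / (1 - real p powr (-t)))"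
      unfolding g_def .
  qed
qed

lemma A_smooth:
  fixes \<epsilon> :: real and n :: nat
  assumes "\<epsilon> > 0" "n \<ge> 2" "real (h_min_exp n) / ln (real n) \<ge> \<epsilon>"
  shows "prime_factors n \<subseteq> {p. prime p \<and> real p \<le> exp (1/\<epsilon>)}"
proof
  fix p assume pp: "p \<in> prime_factors n"
  have prp: "prime p" using pp by auto
  have pdvd: "p dvd n" using pp by auto
  define \<alpha> where "\<alpha> = multiplicity p n"
  have fin: "finite ((\<lambda>p. multiplicity p n) ` prime_factors n)" by simp
  have h: "h_min_exp n \<le> \<alpha>" unfolding h_min_exp_def \<alpha>_def
    using Min_le[OF fin] pp by blast
  have lnpos: "ln (real n) > 0" using assms(2) by simp
  have e1: "\<epsilon> * ln (real n) \<le> real (h_min_exp n)"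
    using assms(3) lnpos by (simp add: pos_le_divide_eq)
  have a1: "\<alpha> \<ge> 1" unfolding \<alpha>_def using prp pdvd assms(2)
    by (simp add: prime_multiplicity_gt_zero_iff Suc_le_eq)
  have "p ^ \<alpha> dvd n" unfolding \<alpha>_def by (rule multiplicity_dvd)
  hence "p ^ \<alpha> \<le> n" using assms(2) by (intro dvd_imp_le) auto
  hence "real p ^ \<alpha> \<le> real n" by (metis of_nat_le_iff of_nat_power)
  moreover have p2: "real p \<ge> 2" using prime_ge_2_nat[OF prp] by simp
  ultimately have "ln (real p ^ \<alpha>) \<le> ln (real n)" using assms(2) by (subst ln_le_cancel_iff) auto
  hence l: "real \<alpha> * ln (real p) \<le> ln (real n)" using p2 by (simp add: ln_realpow)
  have "\<epsilon> * (real \<alpha> * ln (real p)) \<le> real \<alpha>"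
    using e1 h l assms(1) by (smt (verit) mult_left_mono of_nat_le_iff)
  hence "real \<alpha> * (\<epsilon> * ln (real p)) \<le> real \<alpha> * 1" by (simp add: algebra_simps)
  hence "\<epsilon> * ln (real p) \<le> 1" using a1 by (simp add: mult_le_cancel_left)
  hence "ln (real p) \<le> 1 / \<epsilon>" using assms(1) by (simp add: pos_le_divide_eq mult.commute)
  hence "real p \<le> exp (1/\<epsilon>)" using p2 by (metis exp_ln exp_le_cancel_iff less_le_trans zero_less_numeral)
  thus "p \<in> {p. prime p \<and> real p \<le> exp (1/\<epsilon>)}" using prp by simp
qed

theorem theorem6:
  fixes \<epsilon> :: real
  assumes "\<epsilon> > 0"
  shows "{n::nat. n \<ge> 2 \<and> real (h_min_exp n) / ln (real n) \<ge> \<epsilon>} \<in> I0"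
proof -
  define A where "A = {n::nat. n \<ge> 2 \<and> real (h_min_exp n) / ln (real n) \<ge> \<epsilon>}"
  define S where "S = {p::nat. prime p \<and> real p \<le> exp (1/\<epsilon>)}"
  have finS: "finite S"
  proof (rule finite_subset)
    show "S \<subseteq> {..nat \<lceil>exp (1/\<epsilon>)\<rceil>}" unfolding S_def
    proof
      fix p assume "p \<in> {p::nat. prime p \<and> real p \<le> exp (1/\<epsilon>)}"
      hence "real p \<le> exp (1/\<epsilon>)" by simp
      hence "real p \<le> real_of_int \<lceil>exp (1/\<epsilon>)\<rceil>" by linarith
      hence "int p \<le> \<lceil>exp (1/\<epsilon>)\<rceil>" by (metis of_int_le_iff of_int_of_nat_eq)
      thus "p \<in> {..nat \<lceil>exp (1/\<epsilon>)\<rceil>}" by (simp add: le_nat_iff)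
    qed
  qed simp
  have primS: "\<forall>p\<in>S. prime p" unfolding S_def by simp
  have AS: "A \<subseteq> {n. n > 0 \<and> prime_factors n \<subseteq> S}"
    unfolding A_def S_def using A_smooth[OF assms] by auto
  have summ: "(\<lambda>a. real a powr (-t)) summable_on A" if "t > 0" for t
  proof (rule nonneg_bdd_above_summable_on)
    show "\<And>x. x \<in> A \<Longrightarrow> 0 \<le> real x powr - t" by simp
    show "bdd_above (sum (\<lambda>a. real a powr (-t)) ` {F. F \<subseteq> A \<and> finite F})"
      using smooth_bound[OF finS primS that] AS
      by (intro bdd_aboveI[where M="\<Prod>p\<in>S. 1 / (1 - real p powr (-t))"]) blast
  qed
  have set_eq: "{t::real. t > 0 \<and> (\<lambda>a. real a powr (-t)) summable_on A} = {t. t > 0}"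
    using summ by auto
  have "conv_exp A = Inf (ereal ` {t::real. t > 0})"
    unfolding conv_exp_def set_eq ..
  also have "\<dots> = 0"
  proof (rule antisym)
    show "Inf (ereal ` {t::real. t > 0}) \<le> 0"
    proof (subst Inf_le_iff, intro allI impI)
      fix y :: ereal assume "y > 0"
      then obtain z where "0 < ereal z" "ereal z < y" using ereal_dense2 by blast
      thus "\<exists>a\<in>ereal ` {t. 0 < t}. a < y" by auto
    qed
    show "0 \<le> Inf (ereal ` {t::real. t > 0})"
      by (rule Inf_greatest) auto
  qed
  finally have "conv_exp A = 0" .
  moreover have "A \<subseteq> {1..}" unfolding A_def by auto
  ultimately show ?thesis unfolding I0_def A_def by simp
qed

end
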